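(* Let $0\le\sigma<1$, let $g(x)=\frac{\sin\log x}{\log x}$ for $0<x<1$, $g(0)=g(1)=0$, and $g_\sigma(x)=g(x)/x^\sigma$ for $0<x\le1$. There is a constant $C_\sigma$ depending only on $\sigma$ such that for all $\ell\ge1$, $$\Big|R_{g_\sigma}(\ell)-\int_0^1g_\sigma(t)\,dt\Big|\le\frac{C_\sigma}{\ell^{1-\sigma}},\qquad\text{where } R_{g_\sigma}(\ell)=\frac1\ell\sum_{k=1}^\ell g_\sigma\big(\tfrac k\ell\big).$$ Further, $\int_0^1g_\sigma(t)\,dt=\arctan\big(\frac{1}{1-\sigma}\big)$. *)

theory Defs
  imports "HOL-Analysis.Analysis"
begin

definition g :: "real \<Rightarrow> real" where
  "g x = (if 0 < x \<and> x < 1 then sin (ln x) / ln x else 0)"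

definition g_sigma :: "real \<Rightarrow> real \<Rightarrow> real" where
  "g_sigma \<sigma> x = g x / x powr \<sigma>"

definition riemann_sum :: "(real \<Rightarrow> real) \<Rightarrow> nat \<Rightarrow> real" where
  "riemann_sum f l = (1 / real l) * (\<Sum>k=1..l. f (real k / real l))"

end

theory Submission
  imports Defs
begin


lemma cube_bound_from_deriv:
  fixes f f' :: "real \<Rightarrow> real"
  assumes f0: "f 0 = 0" and der: "\<And>z. (f has_real_derivative f' z) (at z)"
    and b: "\<And>z. \<bar>f' z\<bar> \<le> z^2"
  shows "\<bar>f y\<bar> \<le> \<bar>y\<bar>^3"
proof (cases "y = 0")
  case True then show ?thesis using f0 by simp
next
  case False
  show ?thesis
  proof (cases "y > 0")
    case True
    obtain z where z: "0 < z" "z < y" "f y - f 0 = (y - 0) * f' z"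
      using MVT2[OF True, of f f'] der by blast
    have "\<bar>f y\<bar> = y * \<bar>f' z\<bar>" using z f0 True by (simp add: abs_mult)
    also have "\<dots> \<le> y * y^2" using b[of z] z True
      by (intro mult_left_mono) (auto intro!: order_trans[OF _ power_mono[of z y 2]])
    finally show ?thesis using True by (simp add: power3_eq_cube power2_eq_square)
  next
    case False
    then have yn: "y < 0" using \<open>y \<noteq> 0\<close> by simp
    obtain z where z: "y < z" "z < 0" "f 0 - f y = (0 - y) * f' z"
      using MVT2[OF yn, of f f'] der by blast
    have zy: "z^2 \<le> y^2" using z yn by (subst abs_le_square_iff[symmetric]) simp
    have "\<bar>f y\<bar> = (-y) * \<bar>f' z\<bar>" using z f0 yn by (simp add: abs_mult)
    also have "\<dots> \<le> (-y) * y^2" using b[of z] z yn zy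
      by (intro mult_left_mono) auto
    finally show ?thesis using yn by (simp add: power3_eq_cube power2_eq_square)
  qed
qed

lemma sinc_bound: "\<bar>sin y / y\<bar> \<le> (1::real)"
  by (cases "y = 0") (auto simp: abs_sin_x_le_abs_x divide_le_eq_1)

lemma phi_cube: "\<bar>(y::real) * cos y - sin y\<bar> \<le> \<bar>y\<bar>^3"
proof (rule cube_bound_from_deriv[where f="\<lambda>y. y * cos y - sin y" and f'="\<lambda>y. - y * sin y"])
  fix z :: real
  show "((\<lambda>y. y * cos y - sin y) has_real_derivative - z * sin z) (at z)"
    by (auto intro!: derivative_eq_intros)
  show "\<bar>- z * sin z\<bar> \<le> z^2"
  proof -
    have "\<bar>z\<bar> * \<bar>sin z\<bar> \<le> \<bar>z\<bar> * \<bar>z\<bar>" using abs_sin_x_le_abs_x[of z] by (rule mult_left_mono) simp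
    then show ?thesis by (simp add: abs_mult power2_eq_square)
  qed
qed simp

lemma psi_cube: "\<bar>2 * sin y - 2 * y * cos y - y^2 * sin (y::real)\<bar> \<le> \<bar>y\<bar>^3"
proof (rule cube_bound_from_deriv[where f="\<lambda>y. 2 * sin y - 2 * y * cos y - y^2 * sin y" and f'="\<lambda>y. - (y * y * cos y)"])
  fix z :: real
  show "((\<lambda>y. 2 * sin y - 2 * y * cos y - y^2 * sin y) has_real_derivative - (z * z * cos z)) (at z)"
    by (auto intro!: derivative_eq_intros simp: algebra_simps power2_eq_square)
  show "\<bar>- (z * z * cos z)\<bar> \<le> z^2"
    by (auto simp: abs_mult power2_eq_square intro!: mult_left_le)
qed simp

lemma phi_sq: "\<bar>(y::real) * cos y - sin y\<bar> \<le> 2 * y^2"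
proof (cases "\<bar>y\<bar> \<le> 1")
  case True
  have "\<bar>y\<bar>^3 \<le> \<bar>y\<bar>^2" using True by (intro power_decreasing) auto
  then show ?thesis using phi_cube[of y] by simp
next
  case False
  have "\<bar>y * cos y - sin y\<bar> \<le> \<bar>y\<bar> + 1"
    using abs_triangle_ineq4[of "y * cos y" "sin y"] abs_cos_le_one[of y] abs_sin_le_one[of y]
      mult_left_le[of "\<bar>cos y\<bar>" "\<bar>y\<bar>"] unfolding abs_mult by linarith
  also have "\<dots> \<le> 2 * y^2"
  proof -
    have "\<bar>y\<bar> * 1 \<le> \<bar>y\<bar> * \<bar>y\<bar>" using False by (intro mult_left_mono) auto
    then show ?thesis using False by (simp add: power2_eq_square abs_mult_self_eq)
  qed
  finally show ?thesis .
qed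



lemma trapezoid:
  fixes f f1 f2 :: "real \<Rightarrow> real"
  assumes ab: "a \<le> b"
    and d0: "\<And>x. x \<in> {a..b} \<Longrightarrow> (f has_real_derivative f1 x) (at x)"
    and d1: "\<And>x. x \<in> {a..b} \<Longrightarrow> (f1 has_real_derivative f2 x) (at x)"
    and M: "\<And>x. x \<in> {a..b} \<Longrightarrow> \<bar>f2 x\<bar> \<le> M"
  shows "\<bar>integral {a..b} f - (b - a) * (f a + f b) / 2\<bar> \<le> M * (b - a)^3"
proof -
  have contf: "continuous_on {a..b} f"
    using d0 by (meson DERIV_continuous continuous_at_imp_continuous_on)
  define F where "F t = integral {a..t} f - (t - a) * (f a + f t) / 2" for t
  define D where "D t = f t - (f a + f t) / 2 - (t - a) * f1 t / 2" for t
  have dF: "(F has_field_derivative D t) (at t within {a..b})" if t: "t \<in> {a..b}" for t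
  proof -
    have "((\<lambda>u. integral {a..u} f) has_real_derivative f t) (at t within {a..b})"
      using integral_has_vector_derivative[OF contf t]
      by (simp add: has_real_derivative_iff_has_vector_derivative)
    moreover have "(f has_real_derivative f1 t) (at t within {a..b})"
      using d0[OF t] by (rule has_field_derivative_at_within)
    ultimately show ?thesis unfolding F_def D_def
      by (auto intro!: derivative_eq_intros simp: field_simps)
  qed
  have Db: "norm (D t) \<le> M * (b - a)^2" if t: "t \<in> {a..b}" for t
  proof (cases "t = a")
    case True
    have "0 \<le> M" using M[of a] ab by force
    then show ?thesis using True by (simp add: D_def)
  next
    case False
    then have at: "a < t" using t by auto
    obtain \<xi> where xi: "a < \<xi>" "\<xi> < t" "f t - f a = (t - a) * f1 \<xi>"
      using MVT2[OF at, of f f1] d0 t by force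
    have "norm (f1 \<xi> - f1 t) \<le> M * norm (\<xi> - t)"
    proof (rule field_differentiable_bound[of "{a..b}"])
      show "\<And>z. z \<in> {a..b} \<Longrightarrow> (f1 has_field_derivative f2 z) (at z within {a..b})"
        using d1 by (rule has_field_derivative_at_within)
      show "\<And>z. z \<in> {a..b} \<Longrightarrow> norm (f2 z) \<le> M" using M by simp
    qed (use xi t in auto)
    then have h1: "\<bar>f1 \<xi> - f1 t\<bar> \<le> M * (t - a)"
      using xi M[of t] t by (smt (verit, best) mult_left_mono real_norm_def)
    have "D t = ((f t - f a) - (t - a) * f1 t) / 2" by (simp add: D_def field_simps)
    also have "\<dots> = (t - a) * (f1 \<xi> - f1 t) / 2" unfolding xi(3) by (simp add: algebra_simps)
    finally have Deq: "D t = (t - a) * (f1 \<xi> - f1 t) / 2" .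
    have "norm (D t) = (t - a) * \<bar>f1 \<xi> - f1 t\<bar> / 2" unfolding Deq using at by (simp add: abs_mult)
    also have "\<dots> \<le> (t - a) * (M * (t - a)) / 2" using h1 at by (intro divide_right_mono mult_left_mono) auto
    also have "\<dots> \<le> M * (b - a)^2"
    proof -
      have M0: "0 \<le> M" using M[of t] t by force
      have "(t - a) * (t - a) \<le> (b - a) * (b - a)" using t at by (intro mult_mono) auto
      then have "M * ((t - a) * (t - a)) \<le> M * ((b - a) * (b - a))" using M0 by (rule mult_left_mono)
      moreover have "0 \<le> M * ((t - a) * (t - a))" using M0 by simp
      moreover have "(t - a) * (M * (t - a)) / 2 = M * ((t - a) * (t - a)) / 2" by simp
      ultimately show ?thesis unfolding power2_eq_square by linarith
    qed
    finally show ?thesis .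
  qed
  have "norm (F b - F a) \<le> (M * (b - a)^2) * norm (b - a)"
    by (rule field_differentiable_bound[of "{a..b}"]) (use dF Db ab in auto)
  moreover have "F a = 0" by (simp add: F_def)
  ultimately show ?thesis using ab by (simp add: F_def power3_eq_cube power2_eq_square algebra_simps)
qed



definition S0 :: "real \<Rightarrow> real" where "S0 y = sin y / y"
definition S1 :: "real \<Rightarrow> real" where "S1 y = (y * cos y - sin y) / y^2"
definition S2 :: "real \<Rightarrow> real" where "S2 y = (2 * sin y - 2 * y * cos y - y^2 * sin y) / y^3"

lemma S0_deriv: "y \<noteq> 0 \<Longrightarrow> (S0 has_real_derivative S1 y) (at y)"
  unfolding S0_def[abs_def] S1_def
  by (auto intro!: derivative_eq_intros simp: field_simps power2_eq_square)

lemma S1_deriv: "y \<noteq> 0 \<Longrightarrow> (S1 has_real_derivative S2 y) (at y)"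
  unfolding S1_def[abs_def] S2_def
  by (auto intro!: derivative_eq_intros simp: field_simps power2_eq_square power3_eq_cube)

lemma S0_bound: "\<bar>S0 y\<bar> \<le> 1" unfolding S0_def by (rule sinc_bound)

lemma S1_bound: "\<bar>S1 y\<bar> \<le> 2"
proof (cases "y = 0")
  case False
  then show ?thesis using phi_sq[of y] unfolding S1_def by (simp add: abs_divide divide_le_eq)
qed (simp add: S1_def)

lemma S2_bound: "\<bar>S2 y\<bar> \<le> 1"
proof (cases "y = 0")
  case False
  then show ?thesis using psi_cube[of y] unfolding S2_def by (simp add: abs_divide divide_le_eq power_abs)
qed (simp add: S2_def)

definition F0 :: "real \<Rightarrow> real \<Rightarrow> real" where "F0 s x = x powr (-s) * S0 (ln x)"
definition F1 :: "real \<Rightarrow> real \<Rightarrow> real" where "F1 s x = x powr (-s-1) * (S1 (ln x) - s * S0 (ln x))"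
definition F2 :: "real \<Rightarrow> real \<Rightarrow> real" where
  "F2 s x = x powr (-s-2) * (S2 (ln x) - (2 * s + 1) * S1 (ln x) + s * (s + 1) * S0 (ln x))"

lemma F0_deriv:
  assumes "0 < x" "x < 1"
  shows "(F0 s has_real_derivative F1 s x) (at x)"
proof -
  have l: "ln x \<noteq> 0" using assms by simp
  have "((\<lambda>x. x powr (-s) * S0 (ln x)) has_real_derivative
        (-s) * x powr (-s - 1) * S0 (ln x) + x powr (-s) * (S1 (ln x) * (1 / x))) (at x)"
    using assms l
    by (auto intro!: derivative_eq_intros DERIV_chain2[OF S0_deriv])
  moreover have "(-s) * x powr (-s - 1) * S0 (ln x) + x powr (-s) * (S1 (ln x) * (1 / x)) = F1 s x"
    using assms unfolding F1_def by (simp add: powr_diff field_simps)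
  ultimately show ?thesis unfolding F0_def[abs_def] by simp
qed

lemma F1_deriv:
  assumes "0 < x" "x < 1"
  shows "(F1 s has_real_derivative F2 s x) (at x)"
proof -
  have l: "ln x \<noteq> 0" using assms by simp
  have "((\<lambda>x. x powr (-s-1) * (S1 (ln x) - s * S0 (ln x))) has_real_derivative
        (-s-1) * x powr (-s - 1 - 1) * (S1 (ln x) - s * S0 (ln x)) + x powr (-s-1) * (S2 (ln x) * (1 / x) - s * (S1 (ln x) * (1/x)))) (at x)"
    using assms l
    by (auto intro!: derivative_eq_intros DERIV_chain2[OF S0_deriv] DERIV_chain2[OF S1_deriv])
  moreover have "(-s-1) * x powr (-s - 1 - 1) * (S1 (ln x) - s * S0 (ln x)) + x powr (-s-1) * (S2 (ln x) * (1 / x) - s * (S1 (ln x) * (1/x))) = F2 s x"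
    using assms unfolding F2_def by (simp add: powr_diff field_simps power2_eq_square eval_nat_numeral)
  ultimately show ?thesis unfolding F1_def[abs_def] by simp
qed

lemma F2_bound:
  assumes "0 < x" "0 \<le> s" "s < 1"
  shows "\<bar>F2 s x\<bar> \<le> 10 * x powr (-s-2)"
proof -
  have "\<bar>S2 (ln x) - (2 * s + 1) * S1 (ln x) + s * (s + 1) * S0 (ln x)\<bar>
      \<le> \<bar>S2 (ln x)\<bar> + (2 * s + 1) * \<bar>S1 (ln x)\<bar> + s * (s + 1) * \<bar>S0 (ln x)\<bar>"
    using assms by (auto simp: abs_mult intro!: order_trans[OF abs_triangle_ineq] order_trans[OF abs_triangle_ineq4])
  also have "\<dots> \<le> 1 + (2 * s + 1) * 2 + s * (s + 1) * 1"
    using assms S0_bound S1_bound S2_bound by (intro add_mono mult_left_mono) auto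
  also have "\<dots> \<le> 10"
  proof -
    have "s * (s + 1) \<le> 1 * 2" by (rule mult_mono) (use assms in auto)
    then show ?thesis using assms by (smt (verit))
  qed
  finally show ?thesis unfolding F2_def using assms by (simp add: abs_mult mult_left_mono mult.commute)
qed

lemma F0_bound: "0 < x \<Longrightarrow> \<bar>F0 s x\<bar> \<le> x powr (-s)"
  unfolding F0_def using S0_bound by (simp add: abs_mult mult_left_le)

lemma g_sigma_F0: "0 < x \<Longrightarrow> x < 1 \<Longrightarrow> g_sigma s x = F0 s x"
  unfolding g_sigma_def g_def F0_def S0_def by (simp add: powr_minus divide_inverse)



lemma powr_int:
  fixes s e :: real
  assumes "s < 1" "0 \<le> e"
  shows "((\<lambda>x. x powr (-s)) has_integral e powr (1-s) / (1-s)) {0..e}"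
proof -
  have "((\<lambda>x. x powr (-s)) has_integral ((\<lambda>x. x powr (1-s) / (1-s)) e - (\<lambda>x. x powr (1-s) / (1-s)) 0)) {0..e}"
  proof (rule fundamental_theorem_of_calculus_interior[where f="\<lambda>x::real. x powr (1-s) / (1-s)"])
    show "continuous_on {0..e} (\<lambda>x. x powr (1 - s) / (1 - s))"
      using assms by (intro continuous_intros continuous_on_powr') auto
    fix x assume x: "x \<in> {0<..<e}"
    have "((\<lambda>x. x powr (1 - s) / (1 - s)) has_real_derivative (1 - s) * x powr (1 - s - 1) / (1 - s)) (at x)"
      using x by (auto intro!: derivative_eq_intros)
    moreover have "(1 - s) * x powr (1 - s - 1) / (1 - s) = x powr (-s)" using assms by simp
    ultimately show "((\<lambda>x. x powr (1 - s) / (1 - s)) has_vector_derivative x powr (-s)) (at x)"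
      by (simp add: has_real_derivative_iff_has_vector_derivative)
  qed (use assms in auto)
  then show ?thesis using assms by simp
qed

lemma inner_t_integral:
  assumes "L \<noteq> 0"
  shows "((\<lambda>t. cos (t * L)) has_integral S0 L) {0..1}"
proof -
  have "((\<lambda>t. cos (t * L)) has_integral ((\<lambda>t. sin (t * L) / L) 1 - (\<lambda>t. sin (t * L) / L) 0)) {0..1}"
  proof (rule fundamental_theorem_of_calculus)
    fix x :: real
    have "((\<lambda>t. sin (t * L) / L) has_real_derivative cos (x * L) * (1 * L) / L) (at x within {0..1})"
      by (auto intro!: derivative_eq_intros)
    then show "((\<lambda>t. sin (t * L) / L) has_vector_derivative cos (x * L)) (at x within {0..1})"
      using assms by (simp add: has_real_derivative_iff_has_vector_derivative)
  qed simp
  then show ?thesis by (simp add: S0_def)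
qed

definition AA :: "real \<Rightarrow> real \<Rightarrow> real \<Rightarrow> real" where
  "AA s x t = exp ((1-s) * ln x) * ((1-s) * cos (t * ln x) + t * sin (t * ln x)) / ((1-s)^2 + t^2)"

lemma inner_x_integral:
  assumes "s < 1" "0 < e" "e \<le> 1"
  shows "((\<lambda>x. x powr (-s) * cos (t * ln x)) has_integral (AA s 1 t - AA s e t)) {e..1}"
proof (rule fundamental_theorem_of_calculus)
  fix x assume x: "x \<in> {e..1}"
  then have x0: "0 < x" using assms by auto
  define a where "a = 1 - s"
  have pos: "a^2 + t^2 > 0" using assms by (simp add: add_pos_nonneg a_def)
  have de: "((\<lambda>x. exp (a * ln x)) has_real_derivative exp (a * ln x) * (a / x)) (at x within {e..1})"
    using x0 by (auto intro!: derivative_eq_intros)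
  have dp: "((\<lambda>x. a * cos (t * ln x) + t * sin (t * ln x)) has_real_derivative (t * t * cos (t * ln x) - a * t * sin (t * ln x)) / x) (at x within {e..1})"
    using x0 by (auto intro!: derivative_eq_intros simp: field_simps)
  have "((\<lambda>x. exp (a * ln x) * (a * cos (t * ln x) + t * sin (t * ln x)) / (a^2 + t^2)) has_real_derivative
     (exp (a * ln x) * (a / x) * (a * cos (t * ln x) + t * sin (t * ln x)) + (t * t * cos (t * ln x) - a * t * sin (t * ln x)) / x * exp (a * ln x)) / (a^2 + t^2)) (at x within {e..1})"
    by (intro DERIV_cdivide DERIV_mult de dp)
  moreover have "(exp (a * ln x) * (a / x) * (a * cos (t * ln x) + t * sin (t * ln x)) + (t * t * cos (t * ln x) - a * t * sin (t * ln x)) / x * exp (a * ln x)) / (a^2 + t^2)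
     = x powr (-s) * cos (t * ln x)"
  proof -
    have E: "exp (a * ln x) = x * x powr (-s)" using x0
      by (simp add: powr_def a_def exp_diff algebra_simps exp_minus divide_inverse)
    have "(exp (a * ln x) * (a / x) * (a * cos (t * ln x) + t * sin (t * ln x)) + (t * t * cos (t * ln x) - a * t * sin (t * ln x)) / x * exp (a * ln x))
        = (a^2 + t^2) * (x powr (-s) * cos (t * ln x))"
      unfolding E using x0 by (simp add: field_simps power2_eq_square)
    moreover have "a > 0" using assms by (simp add: a_def)
    ultimately show ?thesis using pos by simp
  qed
  ultimately show "((\<lambda>x. AA s x t) has_vector_derivative x powr (-s) * cos (t * ln x)) (at x within {e..1})"
    unfolding AA_def a_def[symmetric] by (simp add: has_real_derivative_iff_has_vector_derivative)
qed (use assms in auto)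



lemma arctan_int:
  fixes a :: real
  assumes "0 < a"
  shows "((\<lambda>t. a / (a^2 + t^2)) has_integral arctan (1 / a)) {0..1}"
proof -
  have "((\<lambda>t. a / (a^2 + t^2)) has_integral ((\<lambda>t. arctan (t / a)) 1 - (\<lambda>t. arctan (t / a)) 0)) {0..1}"
  proof (rule fundamental_theorem_of_calculus)
    fix x :: real assume "x \<in> {0..1}"
    have "((\<lambda>t. arctan (t / a)) has_real_derivative inverse (1 + (x / a)\<^sup>2) * (1 / a)) (at x within {0..1})"
      using assms by (auto intro!: derivative_eq_intros)
    moreover have "inverse (1 + (x / a)\<^sup>2) * (1 / a) = a / (a^2 + x^2)"
      using assms by (simp add: field_simps power2_eq_square add_pos_nonneg)
    ultimately show "((\<lambda>t. arctan (t / a)) has_vector_derivative a / (a^2 + x^2)) (at x within {0..1})"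
      by (simp add: has_real_derivative_iff_has_vector_derivative)
  qed simp
  then show ?thesis by simp
qed

lemma AA_bound:
  assumes "s < 1" "0 < e" "t \<in> {0..1}"
  shows "\<bar>AA s e t\<bar> \<le> e powr (1 - s) * (2 - s) / (1 - s)^2"
proof -
  define a where "a = 1 - s"
  have a0: "a > 0" using assms by (simp add: a_def)
  have "\<bar>a * cos (t * ln e) + t * sin (t * ln e)\<bar> \<le> a + 1"
  proof -
    have "\<bar>a * cos (t * ln e)\<bar> \<le> a" using a0 abs_cos_le_one by (simp add: abs_mult mult_left_le)
    moreover have "\<bar>t * sin (t * ln e)\<bar> \<le> 1"
    proof -
      have "t * \<bar>sin (t * ln e)\<bar> \<le> 1 * 1" by (rule mult_mono) (use assms abs_sin_le_one in auto)
      then show ?thesis using assms by (simp add: abs_mult)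
    qed
    ultimately show ?thesis by linarith
  qed
  moreover have "a^2 \<le> a^2 + t^2" by simp
  ultimately have B: "\<bar>a * cos (t * ln e) + t * sin (t * ln e)\<bar> / (a^2 + t^2) \<le> (a + 1) / a^2"
    using a0 by (intro frac_le) auto
  have D0: "a^2 + t^2 > 0" using a0 by (simp add: add_pos_nonneg)
  have AAe: "AA s e t = e powr (1 - s) * ((a * cos (t * ln e) + t * sin (t * ln e)) / (a^2 + t^2))"
    using assms by (simp add: AA_def a_def powr_def)
  have "\<bar>AA s e t\<bar> = e powr (1 - s) * (\<bar>a * cos (t * ln e) + t * sin (t * ln e)\<bar> / (a^2 + t^2))"
    unfolding AAe using D0 by (simp add: abs_mult abs_divide)
  also have "\<dots> \<le> e powr (1 - s) * ((a + 1) / a^2)" using B by (intro mult_left_mono) auto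
  finally have "\<bar>AA s e t\<bar> \<le> e powr (1 - s) * ((a + 1) / a^2)" .
  then show ?thesis by (simp add: a_def)
qed

lemma cont_AA: "s < 1 \<Longrightarrow> 0 < e \<Longrightarrow> continuous_on {0..1} (AA s e)"
  unfolding AA_def[abs_def]
  by (intro continuous_intros) (auto simp: add_pos_nonneg)



lemma int_e1:
  assumes s1: "s < 1" and e0: "0 < e" and e1: "e < 1"
  shows "\<bar>integral {e..1} (g_sigma s) - arctan (1 / (1 - s))\<bar> \<le> e powr (1 - s) * (2 - s) / (1 - s)^2"
proof -
  define a where "a = 1 - s"
  have a0: "a > 0" using s1 by (simp add: a_def)
  define k where "k x t = x powr (-s) * cos (t * ln x)" for x t :: real
  have cont: "continuous_on (cbox (e,0) (1,1)) (\<lambda>(x,t). k x t)"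
  proof -
    have "continuous_on (cbox (e,0) (1,1)) (\<lambda>p. fst p powr (-s) * cos (snd p * ln (fst p)))"
      using e0 by (intro continuous_intros) (auto simp: cbox_Pair_eq less_eq_prod_def)
    moreover have "(\<lambda>p. fst p powr (-s) * cos (snd p * ln (fst p))) = (\<lambda>(x,t). k x t)"
      by (auto simp: k_def)
    ultimately show ?thesis by metis
  qed
  have swap: "integral {e..1} (\<lambda>x. integral {0..1} (k x)) = integral {0..1} (\<lambda>t. integral {e..1} (\<lambda>x. k x t))"
    using integral_swap_continuous[OF cont] by (simp add: box_real)
  have L: "integral {e..1} (\<lambda>x. integral {0..1} (k x)) = integral {e..1} (g_sigma s)"
  proof (rule integral_spike[of "{1}"])
    fix x :: real assume x: "x \<in> {e..1} - {1}"
    then have x0: "0 < x" "x < 1" using e0 by auto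
    have "(k x has_integral x powr (-s) * S0 (ln x)) {0..1}"
      unfolding k_def using inner_t_integral[of "ln x"] x0 by (intro has_integral_mult_right) simp
    then have "integral {0..1} (k x) = F0 s x" by (simp add: integral_unique F0_def)
    then show "g_sigma s x = integral {0..1} (k x)" using g_sigma_F0[OF x0] by simp
  qed simp
  have R: "integral {0..1} (\<lambda>t. integral {e..1} (\<lambda>x. k x t)) = integral {0..1} (\<lambda>t. a / (a^2 + t^2) - AA s e t)"
  proof (rule integral_cong)
    fix t :: real assume "t \<in> {0..1}"
    have "integral {e..1} (\<lambda>x. k x t) = AA s 1 t - AA s e t"
      unfolding k_def using inner_x_integral[of s e t] s1 e0 e1 by (simp add: integral_unique)
    moreover have "AA s 1 t = a / (a^2 + t^2)" by (simp add: AA_def a_def)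
    ultimately show "integral {e..1} (\<lambda>x. k x t) = a / (a^2 + t^2) - AA s e t" by simp
  qed
  have iA: "AA s e integrable_on {0..1}"
    using cont_AA[OF s1 e0] by (rule integrable_continuous_interval)
  have "integral {0..1} (\<lambda>t. a / (a^2 + t^2) - AA s e t) = arctan (1 / a) - integral {0..1} (AA s e)"
    using integral_diff[OF has_integral_integrable[OF arctan_int[OF a0]] iA] integral_unique[OF arctan_int[OF a0]]
    by simp
  then have main: "integral {e..1} (g_sigma s) = arctan (1 / a) - integral {0..1} (AA s e)"
    using swap L R by simp
  have "norm (integral {0..1} (AA s e)) \<le> (e powr (1 - s) * (2 - s) / (1 - s)^2) * Henstock_Kurzweil_Integration.content (cbox 0 (1::real))"
  proof (rule has_integral_bound)
    show "0 \<le> e powr (1 - s) * (2 - s) / (1 - s)^2" using s1 by simp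
    show "(AA s e has_integral integral {0..1} (AA s e)) (cbox 0 1)"
      using iA by (simp add: box_real has_integral_integral)
    fix t :: real assume "t \<in> cbox 0 1"
    then show "norm (AA s e t) \<le> e powr (1 - s) * (2 - s) / (1 - s)^2"
      using AA_bound[OF s1 e0] by (simp add: box_real)
  qed
  then show ?thesis using main by (simp add: a_def)
qed



lemma g_bound:
  assumes "0 \<le> x"
  shows "\<bar>g_sigma s x\<bar> \<le> x powr (-s)"
proof (cases "0 < x \<and> x < 1")
  case True
  then show ?thesis using g_sigma_F0[of x s] F0_bound[of x s] by simp
next
  case False
  then have "g x = 0" by (auto simp: g_def)
  then show ?thesis by (simp add: g_sigma_def)
qed

lemma g_meas: "g_sigma s \<in> borel_measurable (lebesgue_on S)"
proof -
  have "g_sigma s \<in> borel_measurable borel" unfolding g_sigma_def[abs_def] g_def[abs_def] by measurable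
  then have "g_sigma s \<in> borel_measurable lborel" by simp
  then have "g_sigma s \<in> borel_measurable lebesgue" by (rule measurable_completion)
  then show ?thesis by (rule measurable_restrict_space1)
qed

lemma g_integrable:
  assumes "s < 1"
  shows "g_sigma s integrable_on {0..1}"
proof (rule measurable_bounded_by_integrable_imp_integrable_real)
  show "(\<lambda>x. x powr (-s)) integrable_on {0..1}" using assms by (intro has_integral_integrable[OF powr_int[of s 1]]) auto
  show "\<And>x. x \<in> {0..1} \<Longrightarrow> \<bar>g_sigma s x\<bar> \<le> x powr (-s)" using g_bound by auto
qed (auto simp: g_meas)

lemma g_small:
  assumes "s < 1" "0 \<le> e" "e \<le> 1"
  shows "\<bar>integral {0..e} (g_sigma s)\<bar> \<le> e powr (1-s) / (1-s)"
proof -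
  have "norm (integral {0..e} (g_sigma s)) \<le> integral {0..e} (\<lambda>x. x powr (-s))"
  proof (rule integral_norm_bound_integral)
    show "g_sigma s integrable_on {0..e}"
      using integrable_subinterval_real[OF g_integrable[OF assms(1)]] assms by auto
    show "(\<lambda>x. x powr (-s)) integrable_on {0..e}" using assms by (intro has_integral_integrable[OF powr_int[of s e]]) auto
  qed (use g_bound in auto)
  then show ?thesis using integral_unique[OF powr_int[of s e]] assms by simp
qed

lemma g_has_integral:
  assumes s0: "0 \<le> s" and s1: "s < 1"
  shows "(g_sigma s has_integral arctan (1 / (1 - s))) {0..1}"
proof -
  define I where "I = integral {0..1} (g_sigma s)"
  define K where "K = 1 / (1 - s) + (2 - s) / (1 - s)^2"
  have bnd: "\<bar>I - arctan (1 / (1 - s))\<bar> \<le> e powr (1 - s) * K" if e: "0 < e" "e < 1" for e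
  proof -
    have "I = integral {0..e} (g_sigma s) + integral {e..1} (g_sigma s)"
      unfolding I_def using Henstock_Kurzweil_Integration.integral_combine[where a=0 and c=e and b=1 and f="g_sigma s"] g_integrable[OF s1] e by simp
    then have "\<bar>I - arctan (1 / (1 - s))\<bar> \<le> \<bar>integral {0..e} (g_sigma s)\<bar> + \<bar>integral {e..1} (g_sigma s) - arctan (1 / (1 - s))\<bar>"
      by simp
    also have "\<dots> \<le> e powr (1-s) / (1-s) + e powr (1 - s) * (2 - s) / (1 - s)^2"
      using g_small[of s e] int_e1[of s e] e s1 by (intro add_mono) auto
    also have "\<dots> = e powr (1 - s) * K" by (simp add: K_def algebra_simps)
    finally show ?thesis .
  qed
  have lim: "((\<lambda>e. e powr (1 - s) * K) \<longlongrightarrow> 0 * K) (at_right 0)"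
    using s1 by (intro tendsto_mult tendsto_const tendsto_zero_powrI tendsto_ident_at)
      (auto simp: eventually_at_right_less eventually_at_filter)
  have ev: "\<forall>\<^sub>F e in at_right 0. \<bar>I - arctan (1 / (1 - s))\<bar> \<le> e powr (1 - s) * K"
  proof -
    have "\<forall>\<^sub>F e in at_right (0::real). 0 < e \<and> e < 1"
      unfolding eventually_at_right[of 0 1, OF zero_less_one] by (intro exI[of _ 1]) auto
    then show ?thesis by eventually_elim (use bnd in auto)
  qed
  have "\<bar>I - arctan (1 / (1 - s))\<bar> \<le> 0 * K"
    by (rule tendsto_le[OF _ lim tendsto_const ev]) simp
  then have "I = arctan (1 / (1 - s))" by simp
  then show ?thesis using g_integrable[OF s1] unfolding I_def by (simp add: has_integral_integral)
qed



lemma powr_half_bound: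
  fixes x s :: real
  assumes "1/2 \<le> x" "0 \<le> s" "s < 1"
  shows "x powr (-s) \<le> 2"
proof -
  have "x powr (-s) \<le> (1/2) powr (-s)" using assms by (intro powr_mono2') auto
  also have "\<dots> = 2 powr s" by (simp add: powr_minus_divide powr_divide)
  also have "\<dots> \<le> 2 powr 1" using assms by (intro powr_mono) auto
  finally show ?thesis by simp
qed

lemma inv_sq_sum: "m \<ge> 1 \<Longrightarrow> (\<Sum>i=1..m. 1 / (real i)^2) \<le> 2 - 1 / real m"
proof (induction m rule: nat_induct_at_least)
  case base
  then show ?case by simp
next
  case (Suc m)
  have m1: "real m \<ge> 1" using Suc by simp
  have "(\<Sum>i=1..Suc m. 1 / (real i)^2) = (\<Sum>i=1..m. 1 / (real i)^2) + 1 / (real m + 1)^2" by simp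
  also have "\<dots> \<le> 2 - 1 / real m + 1 / (real m + 1)^2" using Suc by simp
  also have "\<dots> \<le> 2 - 1 / (real m + 1)"
  proof -
    have "1 / (real m + 1)^2 + 1 / (real m + 1) \<le> 1 / real m"
      using m1 by (simp add: field_simps power2_eq_square divide_le_eq add_pos_nonneg)
    then show ?thesis by linarith
  qed
  finally show ?case by (simp add: add.commute)
qed

lemma inv_sq_sum2: "(\<Sum>i=1..m. 1 / (real i)^2) \<le> 2"
proof (cases "m \<ge> 1")
  case True
  then show ?thesis using inv_sq_sum[OF True] by (smt (verit) of_nat_0_le_iff divide_nonneg_nonneg)
qed simp

lemma powr_inv_sq: "1 \<le> (i::real) \<Longrightarrow> 0 \<le> (s::real) \<Longrightarrow> i powr (-s-2) \<le> 1 / i^2"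
proof -
  assume i: "1 \<le> i" and s: "0 \<le> s"
  have "i powr (-s-2) \<le> i powr (-2)" using i s by (intro powr_mono) auto
  also have "\<dots> = 1 / i^2" using i by (simp add: powr_minus_divide powr_numeral)
  finally show ?thesis .
qed

lemma trap_h:
  assumes u0: "0 < u" and uv: "u \<le> v" and v1: "v < 1" and s0: "0 \<le> s" and s1: "s < 1"
  shows "\<bar>integral {u..v} (g_sigma s) - (v - u) * (g_sigma s u + g_sigma s v) / 2\<bar> \<le> 10 * u powr (-s-2) * (v - u)^3"
proof -
  have "\<bar>integral {u..v} (F0 s) - (v - u) * (F0 s u + F0 s v) / 2\<bar> \<le> (10 * u powr (-s-2)) * (v - u)^3"
  proof (rule trapezoid[OF uv])
    fix x assume x: "x \<in> {u..v}"
    then have x0: "0 < x" "x < 1" using u0 v1 by auto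
    show "(F0 s has_real_derivative F1 s x) (at x)" using F0_deriv[OF x0] .
    show "(F1 s has_real_derivative F2 s x) (at x)" using F1_deriv[OF x0] .
    have "\<bar>F2 s x\<bar> \<le> 10 * x powr (-s-2)" using F2_bound[OF x0(1) s0 s1] .
    also have "\<dots> \<le> 10 * u powr (-s-2)" using x u0 s0 by (intro mult_left_mono powr_mono2') auto
    finally show "\<bar>F2 s x\<bar> \<le> 10 * u powr (-s-2)" .
  qed
  moreover have "integral {u..v} (g_sigma s) = integral {u..v} (F0 s)"
    by (rule integral_cong) (use u0 v1 g_sigma_F0 in auto)
  moreover have "g_sigma s u = F0 s u" "g_sigma s v = F0 s v"
    using u0 uv v1 g_sigma_F0 by auto
  ultimately show ?thesis by simp
qed

lemma int_decomp:
  assumes "s < 1" and "m \<le> l" and "l \<ge> 1"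
  shows "integral {0..real m / real l} (g_sigma s) = (\<Sum>k=1..m. integral {real (k - 1) / real l..real k / real l} (g_sigma s))"
  using assms(2)
proof (induction m)
  case 0
  then show ?case by simp
next
  case (Suc j)
  have l0: "real l > 0" using assms by simp
  have int: "g_sigma s integrable_on {0..real (Suc j) / real l}"
    using integrable_subinterval_real[OF g_integrable[OF assms(1)]] Suc.prems l0
    by (auto simp: divide_le_eq_1)
  have "integral {0..real (Suc j) / real l} (g_sigma s)
      = integral {0..real j / real l} (g_sigma s) + integral {real j / real l..real (Suc j) / real l} (g_sigma s)"
    using Henstock_Kurzweil_Integration.integral_combine[where a=0 and c="real j / real l" and b="real (Suc j) / real l" and f="g_sigma s"] int l0
    by (simp add: divide_right_mono)
  then show ?case using Suc by simp
qed



lemma riemann_est2: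
  assumes s0: "0 \<le> s" and s1: "s < 1" and l2: "l = m + 2"
  shows "\<bar>riemann_sum (g_sigma s) l - integral {0..1} (g_sigma s)\<bar> \<le> (25 + 1 / (1 - s)) * (1 / real l) powr (1 - s)"
proof -
  define a where "a = 1 - s"
  have a0: "0 < a" "a \<le> 1" using s0 s1 by (auto simp: a_def)
  define N where "N = real l"
  have N2: "N \<ge> 2" using l2 by (simp add: N_def)
  define d where "d = 1 / N"
  have d0: "0 < d" "d \<le> 1/2" using N2 by (auto simp: d_def divide_le_eq)
  define P where "P k = real k / N" for k :: nat
  define h where "h = g_sigma s"
  define I where "I k = integral {P (k - 1)..P k} h" for k
  define T where "T k = d * h (P k) - I k" for k
  define D where "D = d powr a"
  have dD: "d \<le> D" using powr_mono'[of a 1 d] a0 d0 by (simp add: D_def)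
  have dsD: "d * d powr (-s) = D" using d0 by (simp add: D_def a_def powr_mult_base)
  have Pd: "P k = real k * d" for k by (simp add: P_def d_def)
  have D0: "0 \<le> D" by (simp add: D_def)
  have E1: "riemann_sum h l - integral {0..1} h = (\<Sum>k=1..l. T k)"
  proof -
    have "riemann_sum h l = (\<Sum>k=1..l. d * h (P k))"
      by (simp add: riemann_sum_def sum_distrib_left d_def P_def N_def)
    moreover have "integral {0..1} h = (\<Sum>k=1..l. I k)"
      using int_decomp[OF s1, of l l] l2 by (simp add: h_def I_def P_def N_def)
    ultimately show ?thesis by (simp add: T_def sum_subtractf)
  qed
  have E2: "(\<Sum>k=1..l. T k) = T 1 + (\<Sum>i=1..m. T (Suc i)) + T (m + 2)"
  proof -
    have "(\<Sum>k=1..l. T k) = T 1 + (\<Sum>k=Suc 1..Suc (m+1). T k)"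
      using l2 by (subst sum.atLeast_Suc_atMost) auto
    also have "(\<Sum>k=Suc 1..Suc (m+1). T k) = (\<Sum>i=1..m+1. T (Suc i))"
      by (rule sum.shift_bounds_cl_Suc_ivl)
    also have "\<dots> = (\<Sum>i=1..m. T (Suc i)) + T (m + 2)" by simp
    finally show ?thesis by simp
  qed
  have E3: "\<bar>T 1\<bar> \<le> D + D / a"
  proof -
    have "\<bar>d * h (P 1)\<bar> \<le> D"
    proof -
      have "\<bar>h (P 1)\<bar> \<le> d powr (-s)" using g_bound[of d s] d0 by (simp add: h_def Pd)
      then have "\<bar>d * h (P 1)\<bar> \<le> d * d powr (-s)" using d0 by (simp add: abs_mult mult_left_mono)
      then show ?thesis using dsD by simp
    qed
    moreover have "\<bar>I 1\<bar> \<le> D / a"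
      using g_small[OF s1, of d] d0 by (simp add: I_def h_def Pd D_def a_def)
    ultimately show ?thesis unfolding T_def by linarith
  qed
  have E4: "\<bar>T (m + 2)\<bar> \<le> 2 * D"
  proof -
    have P2: "P (m + 2) = 1" using l2 N2 by (simp add: P_def N_def)
    have h1: "h 1 = 0" by (simp add: h_def g_sigma_def g_def)
    have P1: "P (m + 1) = 1 - d" using l2 N2 by (simp add: P_def N_def d_def field_simps)
    have "norm (integral {1 - d..1} h) \<le> integral {1 - d..1} (\<lambda>x. 2)"
    proof (rule integral_norm_bound_integral)
      show "h integrable_on {1 - d..1}"
        using integrable_subinterval_real[OF g_integrable[OF s1]] d0 by (auto simp: h_def)
      fix x assume x: "x \<in> {1 - d..1}"
      then have "1/2 \<le> x" using d0 by auto
      then have "\<bar>h x\<bar> \<le> x powr (-s)" "x powr (-s) \<le> 2"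
        using g_bound[of x s] powr_half_bound[of x s] s0 s1 by (auto simp: h_def)
      then show "norm (h x) \<le> 2" by simp
    qed (auto intro: integrable_continuous_real continuous_intros)
    also have "\<dots> = 2 * d" using d0 by simp
    moreover have "I (m + 2) = integral {1 - d..1} h"
      using P1 P2 by (simp add: I_def)
    ultimately have "\<bar>I (m + 2)\<bar> \<le> 2 * d" by simp
    moreover have "h (P (m + 2)) = 0" using P2 h1 by simp
    ultimately show ?thesis using dD unfolding T_def by simp
  qed
  define Tr where "Tr i = d * (h (P i) + h (P (Suc i))) / 2 - integral {P i..P (Suc i)} h" for i
  have E5a: "T (Suc i) = Tr i + d / 2 * (h (P (Suc i)) - h (P i))" for i
    by (simp add: T_def Tr_def I_def field_simps)
  have E5b: "\<bar>Tr i\<bar> \<le> 10 * D * (1 / (real i)^2)" if i: "i \<in> {1..m}" for i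
  proof -
    have u0: "0 < P i" using i d0 by (simp add: Pd)
    have v1: "P (Suc i) < 1" using i l2 N2 by (simp add: P_def N_def)
    have vu: "P (Suc i) - P i = d" by (simp add: Pd algebra_simps)
    have "\<bar>integral {P i..P (Suc i)} h - (P (Suc i) - P i) * (h (P i) + h (P (Suc i))) / 2\<bar>
        \<le> 10 * P i powr (-s-2) * (P (Suc i) - P i)^3"
      unfolding h_def by (rule trap_h[OF u0 _ v1 s0 s1]) (simp add: Pd d0)
    then have "\<bar>Tr i\<bar> \<le> 10 * (P i powr (-s-2) * d^3)" unfolding vu Tr_def by (simp add: abs_minus_commute)
    also have "P i powr (-s-2) * d^3 = real i powr (-s-2) * D"
    proof -
      have "P i powr (-s-2) = real i powr (-s-2) * d powr (-s-2)" using d0 by (simp add: Pd powr_mult)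
      moreover have "d^3 = d powr 3" using d0 by (simp add: powr_numeral)
      moreover have "d powr (-s-2) * d powr 3 = D" by (simp add: D_def a_def powr_add[symmetric])
      ultimately show ?thesis by (simp add: mult.assoc)
    qed
    also have "10 * (real i powr (-s-2) * D) \<le> 10 * ((1 / (real i)^2) * D)"
      using powr_inv_sq[of "real i" s] i s0 D0 by (intro mult_left_mono mult_right_mono) auto
    also have "\<dots> = 10 * D * (1 / (real i)^2)" by simp
    finally show ?thesis .
  qed
  have E5: "\<bar>\<Sum>i=1..m. T (Suc i)\<bar> \<le> 20 * D + 3/2 * D"
  proof -
    have "(\<Sum>i=1..m. T (Suc i)) = (\<Sum>i=1..m. Tr i) + d / 2 * (\<Sum>i=1..m. h (P (Suc i)) - h (P i))"
      by (simp add: E5a sum.distrib sum_distrib_left)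
    also have "(\<Sum>i=1..m. h (P (Suc i)) - h (P i)) = h (P (Suc m)) - h (P 1)"
      by (rule sum_Suc_diff) simp
    finally have eq: "(\<Sum>i=1..m. T (Suc i)) = (\<Sum>i=1..m. Tr i) + d / 2 * (h (P (Suc m)) - h (P 1))" .
    have "\<bar>\<Sum>i=1..m. Tr i\<bar> \<le> (\<Sum>i=1..m. \<bar>Tr i\<bar>)" by (rule sum_abs)
    also have "\<dots> \<le> (\<Sum>i=1..m. 10 * D * (1 / (real i)^2))" by (rule sum_mono) (rule E5b)
    also have "\<dots> = 10 * D * (\<Sum>i=1..m. 1 / (real i)^2)" by (simp add: sum_distrib_left)
    also have "\<dots> \<le> 10 * D * 2" using inv_sq_sum2[of m] D0 by (intro mult_left_mono) auto
    finally have S1: "\<bar>\<Sum>i=1..m. Tr i\<bar> \<le> 20 * D" by simp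
    have hm: "\<bar>h (P (Suc m))\<bar> \<le> 2"
    proof -
      have "1/2 \<le> P (Suc m)" using l2 N2 by (simp add: P_def N_def field_simps)
      then show ?thesis using g_bound[of "P (Suc m)" s] powr_half_bound[of "P (Suc m)" s] s0 s1
        by (simp add: h_def)
    qed
    have h1: "\<bar>h (P 1)\<bar> \<le> d powr (-s)" using g_bound[of d s] d0 by (simp add: h_def Pd)
    have "\<bar>d / 2 * (h (P (Suc m)) - h (P 1))\<bar> \<le> d / 2 * (2 + d powr (-s))"
      using hm h1 d0 by (simp add: abs_mult)
    also have "\<dots> = d + D / 2" using dsD by (simp add: algebra_simps)
    also have "\<dots> \<le> 3/2 * D" using dD by simp
    finally have S2: "\<bar>d / 2 * (h (P (Suc m)) - h (P 1))\<bar> \<le> 3/2 * D" .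
    show ?thesis unfolding eq using S1 S2 by linarith
  qed
  have "\<bar>riemann_sum h l - integral {0..1} h\<bar> \<le> (D + D / a) + (20 * D + 3/2 * D) + 2 * D"
    unfolding E1 E2 using E3 E4 E5 by linarith
  also have "\<dots> \<le> (25 + 1 / a) * D" using D0 by (simp add: field_simps)
  finally show ?thesis by (simp add: h_def a_def D_def d_def N_def)
qed


theorem lemma5p9:
  fixes \<sigma> :: real
  assumes "0 \<le> \<sigma>" and "\<sigma> < 1"
  shows "(\<exists>C. \<forall>l::nat. l \<ge> 1 \<longrightarrow>
            \<bar>riemann_sum (g_sigma \<sigma>) l - integral {0..1} (g_sigma \<sigma>)\<bar>
              \<le> C / real l powr (1 - \<sigma>))
         \<and> (g_sigma \<sigma> has_integral arctan (1 / (1 - \<sigma>))) {0..1}"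
proof
  show "\<exists>C. \<forall>l::nat. l \<ge> 1 \<longrightarrow>
            \<bar>riemann_sum (g_sigma \<sigma>) l - integral {0..1} (g_sigma \<sigma>)\<bar>
              \<le> C / real l powr (1 - \<sigma>)"
  proof (intro exI[of _ "25 + 1 / (1 - \<sigma>)"] allI impI)
    fix l :: nat assume l: "l \<ge> 1"
    have a0: "0 < 1 - \<sigma>" using assms by simp
    show "\<bar>riemann_sum (g_sigma \<sigma>) l - integral {0..1} (g_sigma \<sigma>)\<bar> \<le> (25 + 1 / (1 - \<sigma>)) / real l powr (1 - \<sigma>)"
    proof (cases "l = 1")
      case True
      have "riemann_sum (g_sigma \<sigma>) l = 0" using True by (simp add: riemann_sum_def g_sigma_def g_def)
      moreover have "\<bar>integral {0..1} (g_sigma \<sigma>)\<bar> \<le> 1 / (1 - \<sigma>)"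
        using g_small[of \<sigma> 1] assms by simp
      moreover have "0 \<le> 1 / (1 - \<sigma>)" using a0 by simp
      ultimately show ?thesis using True by simp
    next
      case False
      then have "l = (l - 2) + 2" using l by simp
      from riemann_est2[OF assms this]
      have "\<bar>riemann_sum (g_sigma \<sigma>) l - integral {0..1} (g_sigma \<sigma>)\<bar> \<le> (25 + 1 / (1 - \<sigma>)) * (1 / real l) powr (1 - \<sigma>)" .
      also have "\<dots> = (25 + 1 / (1 - \<sigma>)) / real l powr (1 - \<sigma>)" by (simp add: powr_divide)
      finally show ?thesis .
    qed
  qed
  show "(g_sigma \<sigma> has_integral arctan (1 / (1 - \<sigma>))) {0..1}"
    using g_has_integral[OF assms] .
qed

end
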